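(* Fix $q\in[0,1)$. Let $F_n=\max\{I_1,\dots,I_n\}-n$, where $(I_i)_{i\ge1}$ comes from the infinite Bernoulli model. Then for any sequence $(a_n)_{n\ge1}$ of positive reals with $a_n/\log n\to\infty$, we have $F_n/a_n\to0$ almost surely. In particular $F_n/n\to0$ almost surely.
   Context: Infinite Bernoulli model: $(B_{i,j})_{i,j\ge1}$ are independent Bernoulli$(1-q)$ random variables and $I_i=\min\{j\notin\{I_1,\dots,I_{i-1}\}:B_{i,j}=1\}$ for $i\ge1$. *)

theory Defs
  imports "HOL-Probability.Probability"
begin

text \<open>For a realisation b of the array (B_{i,j})_{i,j>=1},
  bern_used b i is the set {I_1,...,I_i} and bern_I b i is I_i (for i >= 1):
  I_i = min {j >= 1. j not in {I_1,...,I_(i-1)} and B_{i,j} = 1}.\<close>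

fun bern_used :: "(nat \<Rightarrow> nat \<Rightarrow> bool) \<Rightarrow> nat \<Rightarrow> nat set" where
  "bern_used b 0 = {}"
| "bern_used b (Suc i) =
     insert (LEAST j. 1 \<le> j \<and> j \<notin> bern_used b i \<and> b (Suc i) j) (bern_used b i)"

definition bern_I :: "(nat \<Rightarrow> nat \<Rightarrow> bool) \<Rightarrow> nat \<Rightarrow> nat" where
  "bern_I b i = (LEAST j. 1 \<le> j \<and> j \<notin> bern_used b (i - 1) \<and> b i j)"

definition bern_F :: "(nat \<Rightarrow> nat \<Rightarrow> bool) \<Rightarrow> nat \<Rightarrow> real" where
  "bern_F b n = real (Max (bern_I b ` {1..n})) - real n"

end

theory Submission
  imports Defs "HOL-Real_Asymp.Real_Asymp"
begin


lemma bern_used_Suc_I: "bern_used b (Suc i) = insert (bern_I b (Suc i)) (bern_used b i)"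
  by (simp add: bern_I_def)

lemma bern_used_eq: "bern_used b i = bern_I b ` {1..i}"
proof (induction i)
  case 0 then show ?case by simp
next
  case (Suc i)
  have "{1..Suc i} = insert (Suc i) {1..i}" by auto
  then show ?case using Suc by (subst bern_used_Suc_I) simp
qed

lemma bern_used_finite: "finite (bern_used b i)"
  by (simp add: bern_used_eq)

lemma bern_used_card: "card (bern_used b i) \<le> i"
  unfolding bern_used_eq using card_image_le[of "{1..i}" "bern_I b"] by simp

lemma bern_used_cong:
  assumes "\<And>i c. 1 \<le> i \<Longrightarrow> i \<le> m \<Longrightarrow> 1 \<le> c \<Longrightarrow> b i c = b' i c"
  shows "i \<le> m \<Longrightarrow> bern_used b i = bern_used b' i"
proof (induction i)
  case 0 then show ?case by simp
next
  case (Suc i)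
  then have eq: "bern_used b i = bern_used b' i" by simp
  have "(\<lambda>j. 1 \<le> j \<and> j \<notin> bern_used b i \<and> b (Suc i) j) = (\<lambda>j. 1 \<le> j \<and> j \<notin> bern_used b' i \<and> b' (Suc i) j)"
    using assms Suc.prems eq by fastforce
  then show ?case using eq by simp
qed

definition good :: "(nat \<Rightarrow> nat \<Rightarrow> bool) \<Rightarrow> bool" where
  "good b \<longleftrightarrow> (\<forall>j\<ge>1. \<exists>c\<ge>1. c \<notin> bern_used b (j - 1) \<and> b j c)"

lemma good_I:
  assumes "good b" "1 \<le> j"
  shows "1 \<le> bern_I b j \<and> bern_I b j \<notin> bern_used b (j - 1) \<and> b j (bern_I b j)"
proof -
  from assms obtain c where "1 \<le> c \<and> c \<notin> bern_used b (j - 1) \<and> b j c" unfolding good_def by auto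
  then show ?thesis unfolding bern_I_def by (rule LeastI)
qed

lemma good_inj:
  assumes "good b" shows "inj_on (bern_I b) {1..n}"
proof (rule inj_onI)
  have *: "bern_I b x \<noteq> bern_I b y" if "x \<in> {1..n}" "y \<in> {1..n}" "x < y" for x y
  proof -
    have "bern_I b x \<in> bern_used b (y - 1)" using that unfolding bern_used_eq by auto
    then show ?thesis using good_I[OF assms, of y] that by auto
  qed
  fix x y assume "x \<in> {1..n}" "y \<in> {1..n}" "bern_I b x = bern_I b y"
  then show "x = y" using *[of x y] *[of y x] by (cases x y rule: linorder_cases) auto
qed

lemma good_F_nonneg:
  assumes "good b" "1 \<le> n"
  shows "0 \<le> bern_F b n"
proof -
  let ?S = "bern_I b ` {1..n}"
  have cS: "card ?S = n" using card_image[OF good_inj[OF assms(1)]] by simp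
  have fin: "finite ?S" by simp
  have ne: "?S \<noteq> {}" using assms by auto
  have "?S \<subseteq> {1..Max ?S}" using good_I[OF assms(1)] Max_ge[OF fin] by fastforce
  then have "card ?S \<le> Max ?S" using card_mono[of "{1..Max ?S}" ?S] by simp
  then show ?thesis unfolding bern_F_def using cS by simp
qed

lemma F_upper:
  assumes "1 \<le> n" "\<And>j. 1 \<le> j \<Longrightarrow> j \<le> n \<Longrightarrow> real (bern_I b j) - real j \<le> U"
  shows "bern_F b n \<le> U"
proof -
  let ?S = "bern_I b ` {1..n}"
  have "Max ?S \<in> ?S" using assms(1) by (intro Max_in) auto
  then obtain j where j: "j \<in> {1..n}" "Max ?S = bern_I b j" by auto
  then show ?thesis unfolding bern_F_def using assms(2)[of j] by auto
qed



lemma used_pred: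
  assumes b: "\<And>i c. 1 \<le> i \<Longrightarrow> i \<le> m \<Longrightarrow> 1 \<le> c \<Longrightarrow> Measurable.pred N (\<lambda>x. b x i c)"
  shows "i \<le> m \<Longrightarrow> Measurable.pred N (\<lambda>x. c \<in> bern_used (b x) i)"
proof (induction i arbitrary: c)
  case 0 then show ?case by simp
next
  case (Suc i)
  have P: "Measurable.pred N (\<lambda>x. 1 \<le> j \<and> j \<notin> bern_used (b x) i \<and> b x (Suc i) j)" for j
  proof (cases "1 \<le> j")
    case True
    have "Measurable.pred N (\<lambda>x. j \<in> bern_used (b x) i)" using Suc by simp
    moreover have "Measurable.pred N (\<lambda>x. b x (Suc i) j)" using b Suc.prems True by simp
    ultimately show ?thesis using True by (simp only: True simp_thms) (intro pred_intros_logic(2,3))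
  qed simp
  have L: "(\<lambda>x. LEAST j. 1 \<le> j \<and> j \<notin> bern_used (b x) i \<and> b x (Suc i) j) \<in> measurable N (count_space UNIV)"
    by (rule measurable_Least) (rule P)
  have "Measurable.pred N (\<lambda>x. c = (LEAST j. 1 \<le> j \<and> j \<notin> bern_used (b x) i \<and> b x (Suc i) j))"
    using L by (rule pred_count_space_const2)
  moreover have "Measurable.pred N (\<lambda>x. c \<in> bern_used (b x) i)" using Suc by simp
  ultimately have "Measurable.pred N (\<lambda>x. c = (LEAST j. 1 \<le> j \<and> j \<notin> bern_used (b x) i \<and> b x (Suc i) j) \<or> c \<in> bern_used (b x) i)"
    by (rule pred_intros_logic(5))
  then show ?case by (simp only: bern_used.simps insert_iff)
qed

lemma I_meas:
  assumes b: "\<And>i c. 1 \<le> i \<Longrightarrow> i \<le> n \<Longrightarrow> 1 \<le> c \<Longrightarrow> Measurable.pred N (\<lambda>x. b x i c)"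
    and n: "1 \<le> n"
  shows "(\<lambda>x. bern_I (b x) n) \<in> measurable N (count_space UNIV)"
  unfolding bern_I_def
proof (rule measurable_Least)
  fix j
  show "Measurable.pred N (\<lambda>x. 1 \<le> j \<and> j \<notin> bern_used (b x) (n - 1) \<and> b x n j)"
  proof (cases "1 \<le> j")
    case True
    have "Measurable.pred N (\<lambda>x. j \<in> bern_used (b x) (n - 1))" by (rule used_pred[OF b]) auto
    moreover have "Measurable.pred N (\<lambda>x. b x n j)" using b True n by simp
    ultimately show ?thesis using True by (simp only: True simp_thms) (intro pred_intros_logic(2,3))
  qed simp
qed



locale bmodel = prob_space M for M :: "'w measure" +
  fixes B :: "nat \<Rightarrow> nat \<Rightarrow> 'w \<Rightarrow> bool" and q :: real
  assumes q0: "0 \<le> q" and q1: "q < 1"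
  and rv: "\<And>i j. 1 \<le> i \<Longrightarrow> 1 \<le> j \<Longrightarrow> B i j \<in> measurable M (count_space UNIV)"
  and indep: "indep_vars (\<lambda>_. count_space UNIV) (\<lambda>(i, j). B i j) ({1..} \<times> {1..})"
  and bern: "\<And>i j. 1 \<le> i \<Longrightarrow> 1 \<le> j \<Longrightarrow> prob {\<omega> \<in> space M. B i j \<omega>} = 1 - q"
begin

lemma Bpred: "1 \<le> i \<Longrightarrow> 1 \<le> c \<Longrightarrow> Measurable.pred M (\<lambda>\<omega>. B i c \<omega>)"
  using rv by simp

lemma key:
  assumes j: "1 \<le> j" and N: "j - 1 \<le> N"
  shows "prob {\<omega>\<in>space M. \<forall>c\<in>{1..N}. c \<notin> bern_used (\<lambda>i c. B i c \<omega>) (j - 1) \<longrightarrow> \<not> B j c \<omega>}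
     \<le> q ^ (N + 1 - j)"
proof -
  define U where "U \<omega> = bern_used (\<lambda>i c. B i c \<omega>) (j - 1)" for \<omega>
  define K0 where "K0 = {1..<j} \<times> {1::nat..}"
  define Kf where "Kf x = (if x = 0 then K0 else {(j,x)})" for x :: nat
  define MM where "MM l = PiM (Kf l) (\<lambda>_. count_space UNIV :: bool measure)" for l
  define Y where "Y l \<omega> = restrict (\<lambda>p. (\<lambda>(i, j). B i j) p \<omega>) (Kf l)" for l \<omega>
  have ind: "indep_vars MM Y UNIV"
    unfolding MM_def Y_def
    using j by (intro indep_vars_restrict[OF indep]) (auto simp: Kf_def K0_def disjoint_family_on_def)
  then have indS: "indep_sets (\<lambda>l. {Y l -` A \<inter> space M | A. A \<in> sets (MM l)}) UNIV"
    and Ymeas: "\<And>l. Y l \<in> measurable M (MM l)"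
    unfolding indep_vars_def2 by auto
  define AS where "AS S = {\<omega>\<in>space M. U \<omega> \<inter> {1..N} = S}" for S
  define Z where "Z c = {\<omega>\<in>space M. \<not> B j c \<omega>}" for c
  define ZA where "ZA S = {\<omega>\<in>space M. \<forall>c\<in>{1..N} - S. \<not> B j c \<omega>}" for S
  have AS_ev: "AS S \<in> {Y 0 -` A \<inter> space M | A. A \<in> sets (MM 0)}" for S
  proof -
    define G where "G = {f\<in>space (MM 0). S \<subseteq> {1..N} \<and> (\<forall>c\<in>{1..N}. (c \<in> bern_used (\<lambda>i c. f (i,c)) (j-1)) = (c \<in> S))}"
    have comp: "Measurable.pred (MM 0) (\<lambda>f. f (i,c))" if "1 \<le> i" "i \<le> j - 1" "1 \<le> c" for i c
    proof -
      have "(i,c) \<in> Kf 0" using that j by (auto simp: Kf_def K0_def)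
      then show ?thesis unfolding MM_def by (rule measurable_component_singleton)
    qed
    have "Measurable.pred (MM 0) (\<lambda>f. \<forall>c\<in>{1..N}. (c \<in> bern_used (\<lambda>i c. f (i,c)) (j-1)) = (c \<in> S))"
    proof (rule pred_intros_finite(3))
      fix c
      have "Measurable.pred (MM 0) (\<lambda>f. c \<in> bern_used (\<lambda>i c. f (i,c)) (j-1))"
        by (rule used_pred[where m="j-1"]) (use comp in auto)
      then show "Measurable.pred (MM 0) (\<lambda>f. (c \<in> bern_used (\<lambda>i c. f (i,c)) (j-1)) = (c \<in> S))"
        by (rule pred_intros_logic(6)) simp
    qed simp
    then have G: "G \<in> sets (MM 0)" unfolding G_def pred_def by (cases "S \<subseteq> {1..N}") simp_all
    have "AS S = Y 0 -` G \<inter> space M"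
    proof -
      have "Y 0 \<omega> \<in> space (MM 0)" if "\<omega> \<in> space M" for \<omega>
        using measurable_space[OF Ymeas that] .
      moreover have "bern_used (\<lambda>i c. Y 0 \<omega> (i,c)) (j-1) = U \<omega>" for \<omega>
        unfolding U_def by (rule bern_used_cong[where m="j-1"]) (auto simp: Y_def Kf_def K0_def)
      ultimately show ?thesis unfolding AS_def G_def by auto
    qed
    then show ?thesis using G by blast
  qed
  have Z_ev: "Z c \<in> {Y c -` A \<inter> space M | A. A \<in> sets (MM c)}" if c: "1 \<le> c" for c
  proof -
    define G where "G = {f\<in>space (MM c). \<not> f (j,c)}"
    have "Measurable.pred (MM c) (\<lambda>f. f (j,c))"
      unfolding MM_def using c by (intro measurable_component_singleton) (simp add: Kf_def)
    then have "Measurable.pred (MM c) (\<lambda>f. \<not> f (j,c))" by (rule pred_intros_logic(2))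
    then have G: "G \<in> sets (MM c)" unfolding G_def pred_def by simp
    have "Z c = Y c -` G \<inter> space M"
    proof -
      have "Y c \<omega> \<in> space (MM c)" if "\<omega> \<in> space M" for \<omega> using measurable_space[OF Ymeas that] .
      moreover have "Y c \<omega> (j,c) = B j c \<omega>" for \<omega> using c by (simp add: Y_def Kf_def)
      ultimately show ?thesis unfolding Z_def G_def by auto
    qed
    then show ?thesis using G by blast
  qed
  have AS_sets: "AS S \<in> sets M" for S
  proof -
    obtain A where "AS S = Y 0 -` A \<inter> space M" "A \<in> sets (MM 0)" using AS_ev[of S] by blast
    then show ?thesis using measurable_sets[OF Ymeas[of 0]] by simp
  qed
  have Zq: "prob (Z c) = q" if "1 \<le> c" for c
  proof -
    have "Z c = space M - {\<omega>\<in>space M. B j c \<omega>}" unfolding Z_def by auto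
    moreover have "{\<omega>\<in>space M. B j c \<omega>} \<in> sets M" using Bpred[OF j that] unfolding pred_def by simp
    ultimately show ?thesis using prob_compl bern[OF j that] by simp
  qed
  have prodS: "prob (AS S \<inter> ZA S) = prob (AS S) * q ^ card ({1..N} - S)" for S
  proof -
    let ?J = "insert 0 ({1..N} - S)"
    define Af where "Af l = (if l = 0 then AS S else Z l)" for l
    have mem: "\<forall>l\<in>?J. Af l \<in> {Y l -` A \<inter> space M | A. A \<in> sets (MM l)}"
    proof
      fix l assume l: "l \<in> ?J"
      show "Af l \<in> {Y l -` A \<inter> space M | A. A \<in> sets (MM l)}"
      proof (cases "l = 0")
        case True then show ?thesis using AS_ev[of S] by (simp add: Af_def)
      next
        case False then show ?thesis using Z_ev[of l] l by (simp add: Af_def)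
      qed
    qed
    have "prob (\<Inter>l\<in>?J. Af l) = (\<Prod>l\<in>?J. prob (Af l))"
      by (rule indep_setsD[OF indS _ _ _ mem]) auto
    also have "\<dots> = prob (AS S) * (\<Prod>c\<in>{1..N} - S. prob (Z c))"
      by (subst prod.insert) (auto simp: Af_def intro!: prod.cong)
    also have "\<dots> = prob (AS S) * q ^ card ({1..N} - S)"
      using Zq by simp
    also have "(\<Inter>l\<in>?J. Af l) = AS S \<inter> ZA S"
      by (auto simp: Af_def AS_def Z_def ZA_def)
    finally show ?thesis .
  qed
  have ZA_sets: "ZA S \<in> sets M" for S
  proof -
    have "Measurable.pred M (\<lambda>\<omega>. \<forall>c\<in>{1..N} - S. \<not> B j c \<omega>)"
      by (rule pred_intros_finite(3)) (auto intro!: pred_intros_logic(2) Bpred j)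
    then show ?thesis unfolding ZA_def pred_def by simp
  qed
  have disj: "disjoint_family_on AS (Pow {1..N})" by (auto simp: disjoint_family_on_def AS_def)
  let ?E = "{\<omega>\<in>space M. \<forall>c\<in>{1..N}. c \<notin> bern_used (\<lambda>i c. B i c \<omega>) (j - 1) \<longrightarrow> \<not> B j c \<omega>}"
  have sub: "?E \<subseteq> (\<Union>S\<in>Pow {1..N}. AS S \<inter> ZA S)"
  proof
    fix \<omega> assume "\<omega> \<in> ?E"
    then show "\<omega> \<in> (\<Union>S\<in>Pow {1..N}. AS S \<inter> ZA S)"
      by (intro UN_I[of "U \<omega> \<inter> {1..N}"]) (auto simp: AS_def ZA_def U_def)
  qed
  have "prob ?E \<le> prob (\<Union>S\<in>Pow {1..N}. AS S \<inter> ZA S)"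
    by (rule finite_measure_mono[OF sub]) (auto intro!: sets.finite_UN AS_sets ZA_sets)
  also have "\<dots> \<le> (\<Sum>S\<in>Pow {1..N}. prob (AS S \<inter> ZA S))"
    by (rule finite_measure_subadditive_finite) (auto intro!: AS_sets ZA_sets)
  also have "\<dots> \<le> (\<Sum>S\<in>Pow {1..N}. prob (AS S) * q ^ (N + 1 - j))"
  proof (rule sum_mono)
    fix S assume S: "S \<in> Pow {1..N}"
    show "prob (AS S \<inter> ZA S) \<le> prob (AS S) * q ^ (N + 1 - j)"
    proof (cases "AS S = {}")
      case True then show ?thesis by simp
    next
      case False
      then obtain \<omega> where "\<omega> \<in> AS S" by auto
      then have "S = U \<omega> \<inter> {1..N}" by (auto simp: AS_def)
      then have "card S \<le> card (U \<omega>)" by (simp add: U_def bern_used_finite card_mono)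
      also have "\<dots> \<le> j - 1" unfolding U_def by (rule bern_used_card)
      finally have cS: "card S \<le> j - 1" .
      have "card ({1..N} - S) = N - card S" using S by (subst card_Diff_subset) (auto intro: finite_subset)
      then have "N + 1 - j \<le> card ({1..N} - S)" using cS j by simp
      then have "q ^ card ({1..N} - S) \<le> q ^ (N + 1 - j)"
        using q0 q1 by (intro power_decreasing) auto
      then show ?thesis unfolding prodS by (intro mult_left_mono) auto
    qed
  qed
  also have "\<dots> = prob (\<Union>S\<in>Pow {1..N}. AS S) * q ^ (N + 1 - j)"
    using disj by (subst finite_measure_finite_Union) (auto simp: sum_distrib_right AS_sets)
  also have "\<dots> \<le> q ^ (N + 1 - j)"
    using q0 by (intro mult_left_le_one_le) auto
  finally show ?thesis .
qed

end


lemma det: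
  fixes b :: "nat \<Rightarrow> nat \<Rightarrow> bool" and a :: "nat \<Rightarrow> real" and cc :: real
  assumes g: "good b" and cc: "0 \<le> cc"
    and ev: "eventually (\<lambda>n. real (bern_I b n) < real n + cc * ln (real n) + 1) sequentially"
    and a_pos: "\<And>n. 1 \<le> n \<Longrightarrow> a n > 0"
    and a_growth: "filterlim (\<lambda>n. a n / ln (real n)) at_top sequentially"
  shows "(\<lambda>n. bern_F b n / a n) \<longlonglongrightarrow> 0"
proof -
  obtain J0 where J0: "\<And>n. n \<ge> J0 \<Longrightarrow> real (bern_I b n) < real n + cc * ln (real n) + 1"
    using ev unfolding eventually_sequentially by blast
  define C where "C = (\<Sum>j\<in>{1..J0}. real (bern_I b j))"
  have C0: "0 \<le> C" unfolding C_def by (intro sum_nonneg) auto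
  have bound: "bern_F b n \<le> C + 1 + cc * ln (real n)" if n: "1 \<le> n" for n
  proof (rule F_upper[OF n])
    fix j assume j: "1 \<le> j" "j \<le> n"
    have lnj: "0 \<le> ln (real j)" "ln (real j) \<le> ln (real n)" using j by auto
    have lnn: "0 \<le> cc * ln (real n)" using n cc by auto
    show "real (bern_I b j) - real j \<le> C + 1 + cc * ln (real n)"
    proof (cases "j \<le> J0")
      case True
      then have "real (bern_I b j) \<le> C" unfolding C_def
        using j by (intro member_le_sum) auto
      then show ?thesis using lnn by simp
    next
      case False
      then have "real (bern_I b j) < real j + cc * ln (real j) + 1" using J0 by simp
      moreover have "cc * ln (real j) \<le> cc * ln (real n)" using lnj cc by (intro mult_left_mono) auto
      ultimately show ?thesis using C0 by simp
    qed
  qed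
  have lim1: "(\<lambda>n. inverse (a n / ln (real n))) \<longlonglongrightarrow> 0"
    by (rule tendsto_inverse_0_at_top[OF a_growth])
  have ln_top: "filterlim (\<lambda>n. ln (real n)) at_top sequentially"
    by (intro filterlim_compose[OF ln_at_top] filterlim_real_sequentially)
  have "eventually (\<lambda>n. ln (real n) \<le> a n) sequentially"
  proof -
    have "eventually (\<lambda>n. 1 \<le> a n / ln (real n)) sequentially"
      using a_growth by (simp add: filterlim_at_top)
    moreover have "eventually (\<lambda>n. 0 < ln (real n)) sequentially"
      using ln_top by (simp add: filterlim_at_top_dense)
    ultimately show ?thesis
      by eventually_elim (simp add: field_simps)
  qed
  then have a_top: "filterlim a at_top sequentially"
    by (rule filterlim_at_top_mono[OF ln_top])
  have lim2: "(\<lambda>n. inverse (a n)) \<longlonglongrightarrow> 0"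
    by (rule tendsto_inverse_0_at_top[OF a_top])
  have limh: "(\<lambda>n. (C + 1) * inverse (a n) + cc * inverse (a n / ln (real n))) \<longlonglongrightarrow> 0"
    using tendsto_add[OF tendsto_mult_right_zero[OF lim2, of "C+1"] tendsto_mult_right_zero[OF lim1, of cc]]
    by simp
  show ?thesis
  proof (rule tendsto_sandwich[OF _ _ tendsto_const limh])
    show "eventually (\<lambda>n. 0 \<le> bern_F b n / a n) sequentially"
      using eventually_ge_at_top[of 1]
      by eventually_elim (use good_F_nonneg[OF g] a_pos in \<open>auto intro!: divide_nonneg_pos\<close>)
    show "eventually (\<lambda>n. bern_F b n / a n \<le> (C + 1) * inverse (a n) + cc * inverse (a n / ln (real n))) sequentially"
      using eventually_ge_at_top[of 1]
    proof eventually_elim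
      case (elim n)
      have "bern_F b n / a n \<le> (C + 1 + cc * ln (real n)) / a n"
        using bound[OF elim] a_pos[OF elim] by (intro divide_right_mono) auto
      also have "\<dots> = (C + 1) * inverse (a n) + cc * inverse (a n / ln (real n))"
        by (simp add: divide_inverse algebra_simps)
      finally show ?case .
    qed
  qed
qed



context bmodel
begin

lemma E_sets:
  assumes j: "1 \<le> j"
  shows "{\<omega>\<in>space M. \<forall>c\<in>{1..N}. c \<notin> bern_used (\<lambda>i c. B i c \<omega>) (j-1) \<longrightarrow> \<not> B j c \<omega>} \<in> sets M"
proof -
  have "Measurable.pred M (\<lambda>\<omega>. \<forall>c\<in>{1..N}. c \<notin> bern_used (\<lambda>i c. B i c \<omega>) (j-1) \<longrightarrow> \<not> B j c \<omega>)"
  proof (rule pred_intros_finite(3))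
    fix c assume c: "c \<in> {1..N}"
    have "Measurable.pred M (\<lambda>\<omega>. c \<in> bern_used (\<lambda>i c. B i c \<omega>) (j-1))"
      by (rule used_pred[where m="j-1" and b="\<lambda>\<omega> i c. B i c \<omega>"]) (auto intro: Bpred)
    moreover have "Measurable.pred M (\<lambda>\<omega>. B j c \<omega>)" using c j by (intro Bpred) auto
    ultimately show "Measurable.pred M (\<lambda>\<omega>. c \<notin> bern_used (\<lambda>i c. B i c \<omega>) (j-1) \<longrightarrow> \<not> B j c \<omega>)"
      by (intro pred_intros_logic(2,4))
  qed simp
  then show ?thesis by (simp add: pred_def)
qed

lemma good_AE: "AE \<omega> in M. good (\<lambda>i c. B i c \<omega>)"
proof -
  have "AE \<omega> in M. 1 \<le> j \<longrightarrow> (\<exists>c\<ge>1. c \<notin> bern_used (\<lambda>i c. B i c \<omega>) (j-1) \<and> B j c \<omega>)" for j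
  proof (cases "1 \<le> j")
    case False then show ?thesis by simp
  next
    case True
    define E where "E k = {\<omega>\<in>space M. \<forall>c\<in>{1..j - 1 + k}. c \<notin> bern_used (\<lambda>i c. B i c \<omega>) (j-1) \<longrightarrow> \<not> B j c \<omega>}" for k
    have Es: "E k \<in> sets M" for k unfolding E_def using E_sets[OF True] .
    have Ep: "prob (E k) \<le> q ^ k" for k
      using key[OF True, of "j-1+k"] True unfolding E_def by simp
    define Z where "Z = (\<Inter>k. E k)"
    have Zs: "Z \<in> sets M" unfolding Z_def using Es by auto
    have Zk: "prob Z \<le> q ^ k" for k
    proof -
      have "prob Z \<le> prob (E k)" by (rule finite_measure_mono[OF _ Es]) (auto simp: Z_def)
      then show ?thesis using Ep[of k] by simp
    qed
    have "(\<lambda>k. q ^ k) \<longlonglongrightarrow> 0" using q0 q1 by (intro LIMSEQ_power_zero) auto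
    then have "prob Z \<le> 0" by (rule LIMSEQ_le_const) (use Zk in auto)
    then have "prob Z = 0" using measure_nonneg[of M Z] by simp
    then have Zn: "Z \<in> null_sets M" using Zs by (simp add: null_sets_def emeasure_eq_measure)
    show ?thesis
    proof (rule AE_I'[OF Zn])
      show "{\<omega> \<in> space M. \<not> (1 \<le> j \<longrightarrow> (\<exists>c\<ge>1. c \<notin> bern_used (\<lambda>i c. B i c \<omega>) (j - 1) \<and> B j c \<omega>))} \<subseteq> Z"
        by (auto simp: Z_def E_def)
    qed
  qed
  then have "AE \<omega> in M. \<forall>j. 1 \<le> j \<longrightarrow> (\<exists>c\<ge>1. c \<notin> bern_used (\<lambda>i c. B i c \<omega>) (j-1) \<and> B j c \<omega>)"
    by (subst AE_all_countable) auto
  then show ?thesis by (simp add: good_def)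
qed

lemma tailP:
  assumes j: "1 \<le> j"
  shows "prob {\<omega>\<in>space M. j + k \<le> bern_I (\<lambda>i c. B i c \<omega>) j} \<le> q ^ k"
proof -
  let ?N = "j + k - 1"
  let ?E = "{\<omega>\<in>space M. \<forall>c\<in>{1..?N}. c \<notin> bern_used (\<lambda>i c. B i c \<omega>) (j-1) \<longrightarrow> \<not> B j c \<omega>}"
  have sub: "{\<omega>\<in>space M. j + k \<le> bern_I (\<lambda>i c. B i c \<omega>) j} \<subseteq> ?E"
  proof safe
    fix \<omega> c assume \<omega>: "\<omega> \<in> space M" "j + k \<le> bern_I (\<lambda>i c. B i c \<omega>) j" and c: "c \<in> {1..?N}"
      "c \<notin> bern_used (\<lambda>i c. B i c \<omega>) (j-1)" "B j c \<omega>"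
    then have "bern_I (\<lambda>i c. B i c \<omega>) j \<le> c" unfolding bern_I_def by (intro Least_le) auto
    then show False using \<omega> c j by auto
  qed
  have "prob {\<omega>\<in>space M. j + k \<le> bern_I (\<lambda>i c. B i c \<omega>) j} \<le> prob ?E"
    by (rule finite_measure_mono[OF sub E_sets[OF j]])
  also have "\<dots> \<le> q ^ (?N + 1 - j)" by (rule key[OF j]) simp
  also have "?N + 1 - j = k" using j by simp
  finally show ?thesis .
qed

end


context bmodel
begin

lemma BC: "\<exists>cc\<ge>0. AE \<omega> in M. eventually (\<lambda>n. real (bern_I (\<lambda>i c. B i c \<omega>) n) < real n + cc * ln (real n) + 1) sequentially"
proof -
  define r where "r = max q (1/2)"
  have r: "0 < r" "r < 1" "q \<le> r" using q0 q1 by (auto simp: r_def)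
  have lnr: "ln r < 0" using r by simp
  define cc where "cc = 2 / (- ln r)"
  have cc: "0 < cc" using lnr by (simp add: cc_def)
  define kk where "kk n = nat \<lceil>cc * ln (real n)\<rceil>" for n :: nat
  define A where "A n = (if n = 0 then {} else {\<omega>\<in>space M. n + kk n \<le> bern_I (\<lambda>i c. B i c \<omega>) n})" for n
  have A_sets: "A n \<in> sets M" for n
  proof (cases "n = 0")
    case False
    have "(\<lambda>\<omega>. bern_I (\<lambda>i c. B i c \<omega>) n) \<in> measurable M (count_space UNIV)"
      by (rule I_meas[where b="\<lambda>\<omega> i c. B i c \<omega>"]) (use False in \<open>auto intro: Bpred\<close>)
    then have "Measurable.pred M (\<lambda>\<omega>. n + kk n \<le> bern_I (\<lambda>i c. B i c \<omega>) n)"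
      by (rule pred_const_le) simp
    then show ?thesis using False by (simp add: A_def pred_def)
  qed (simp add: A_def)
  have A_bound: "prob (A n) \<le> real n powr -2" if n: "1 \<le> n" for n
  proof -
    have x0: "0 \<le> cc * ln (real n)" using cc n by simp
    have "prob (A n) \<le> q ^ kk n" using tailP[OF n, of "kk n"] n by (simp add: A_def)
    also have "\<dots> \<le> r ^ kk n" using q0 r by (intro power_mono) auto
    also have "\<dots> = r powr real (kk n)" using r by (simp add: powr_realpow)
    also have "\<dots> \<le> r powr (cc * ln (real n))"
    proof (rule powr_mono')
      show "cc * ln (real n) \<le> real (kk n)" unfolding kk_def using x0
        by (metis of_nat_nat le_of_int_ceiling ceiling_mono ceiling_zero of_int_of_nat_eq order.trans)
    qed (use r in auto)
    also have "\<dots> = exp (cc * ln (real n) * ln r)" using r by (simp add: powr_def)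
    also have "cc * ln (real n) * ln r = -2 * ln (real n)" using lnr by (simp add: cc_def field_simps)
    also have "exp (-2 * ln (real n)) = real n powr -2" using n by (simp add: powr_def)
    finally show ?thesis .
  qed
  have summ: "summable (\<lambda>n. prob (A n))"
  proof (rule summable_comparison_test'[where N=1])
    show "summable (\<lambda>n. real n powr -2)" by (simp add: summable_real_powr_iff)
    show "norm (prob (A n)) \<le> real n powr -2" if "1 \<le> n" for n using A_bound[OF that] by simp
  qed
  have "AE \<omega> in M. eventually (\<lambda>n. \<omega> \<in> space M - A n) sequentially"
    by (rule borel_cantelli_AE1[OF A_sets _ summ]) (simp add: less_top[symmetric])
  then have "AE \<omega> in M. eventually (\<lambda>n. real (bern_I (\<lambda>i c. B i c \<omega>) n) < real n + cc * ln (real n) + 1) sequentially"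
    using AE_space
  proof eventually_elim
    case (elim \<omega>)
    from elim(1) eventually_ge_at_top[of 1] show ?case
    proof eventually_elim
      case (elim n)
      then have "bern_I (\<lambda>i c. B i c \<omega>) n < n + kk n" using \<open>\<omega> \<in> space M\<close> by (auto simp: A_def)
      moreover have "real (kk n) < cc * ln (real n) + 1"
      proof -
        have "0 \<le> cc * ln (real n)" using cc elim by simp
        then show ?thesis unfolding kk_def by linarith
      qed
      ultimately show ?case by linarith
    qed
  qed
  then show ?thesis using cc by (intro exI[of _ cc]) auto
qed

end

lemma main_gen:
  assumes "bmodel M B q"
    and a_pos: "\<And>n. 1 \<le> n \<Longrightarrow> a n > 0"
    and a_growth: "filterlim (\<lambda>n. a n / ln (real n)) at_top sequentially"
  shows "AE \<omega> in M. (\<lambda>n. bern_F (\<lambda>i j. B i j \<omega>) n / a n) \<longlonglongrightarrow> 0"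
proof -
  interpret bmodel M B q by fact
  obtain cc where cc: "0 \<le> cc" and ae: "AE \<omega> in M. eventually (\<lambda>n. real (bern_I (\<lambda>i c. B i c \<omega>) n) < real n + cc * ln (real n) + 1) sequentially"
    using BC by blast
  from ae good_AE show ?thesis
  proof eventually_elim
    case (elim \<omega>)
    show ?case by (rule det[OF elim(2) cc elim(1) a_pos a_growth])
  qed
qed


theorem lemma2p2:
  fixes M :: "'w measure" and B :: "nat \<Rightarrow> nat \<Rightarrow> 'w \<Rightarrow> bool"
    and q :: real and a :: "nat \<Rightarrow> real"
  assumes "prob_space M"
    and q: "0 \<le> q" "q < 1"
    and rv: "\<And>i j. 1 \<le> i \<Longrightarrow> 1 \<le> j \<Longrightarrow>
               B i j \<in> measurable M (count_space UNIV)"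
    and indep: "prob_space.indep_vars M (\<lambda>_. count_space UNIV) (\<lambda>(i, j). B i j)
                  ({1..} \<times> {1..})"
    and bern: "\<And>i j. 1 \<le> i \<Longrightarrow> 1 \<le> j \<Longrightarrow>
               measure M {\<omega> \<in> space M. B i j \<omega>} = 1 - q"
    and a_pos: "\<And>n. 1 \<le> n \<Longrightarrow> a n > 0"
    and a_growth: "filterlim (\<lambda>n. a n / ln (real n)) at_top sequentially"
  shows "(AE \<omega> in M. (\<lambda>n. bern_F (\<lambda>i j. B i j \<omega>) n / a n) \<longlonglongrightarrow> 0)
    \<and> (AE \<omega> in M. (\<lambda>n. bern_F (\<lambda>i j. B i j \<omega>) n / real n) \<longlonglongrightarrow> 0)"
proof -
  have bm: "bmodel M B q"
    unfolding bmodel_def bmodel_axioms_def using assms by auto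
  have g: "filterlim (\<lambda>n. real n / ln (real n)) at_top sequentially" by real_asymp
  show ?thesis
    using main_gen[OF bm a_pos a_growth] main_gen[OF bm _ g] by auto
qed

end
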